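(* Let $\phi:\mathbb{R}^n\to\mathbb{R}$ satisfy Assumption A and let $0<\gamma L_\phi<2$. Then the discrete-time system with input $e\in\mathbb{R}^n$ $$\tilde u^+=\tilde u-\gamma(\nabla\phi(\tilde u)+e)$$ is ISS with respect to $\mathcal{A}_d=\{u^\star\}$.
   Context: Assumption A: $\phi$ is continuously differentiable and there exist $L_\phi>0$, $u^\star\in\mathbb{R}^n$ and class-$\mathcal{K}_\infty$ functions $\mu_1,\mu_2$ such that $\nabla\phi(u)=0$ iff $u=u^\star$, and for all $u,\tilde u\in\mathbb{R}^n$: $\mu_1(\|u-u^\star\|)\le\phi(u)-\phi(u^\star)$, $\mu_2(\phi(u)-\phi(u^\star))\le\|\nabla\phi(u)\|$, and $\|\nabla\phi(u)-\nabla\phi(\tilde u)\|\le L_\phi\|u-\tilde u\|$. ISS: the system $x^+=G_d(x,e)$ is ISS with respect to a compact set $\mathcal{A}_d$ if there exist $\beta\in\mathcal{KL}$, $\alpha\in\mathcal{K}_\infty$ such that for every bounded input sequence $e$ every solution satisfies $|x(j)|_{\mathcal{A}_d}\le\beta(|x(0)|_{\mathcal{A}_d},j)+\alpha(\sup_k\|e(k)\|)$ for all $j\in\mathbb{N}$. *)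

theory Defs
  imports "HOL-Analysis.Analysis"
begin

definition class_K :: "(real \<Rightarrow> real) \<Rightarrow> bool" where
  "class_K \<alpha> \<longleftrightarrow> continuous_on {0..} \<alpha> \<and> \<alpha> 0 = 0 \<and> strict_mono_on {0..} \<alpha>"

definition class_Kinf :: "(real \<Rightarrow> real) \<Rightarrow> bool" where
  "class_Kinf \<alpha> \<longleftrightarrow> class_K \<alpha> \<and> filterlim \<alpha> at_top at_top"

definition class_KL :: "(real \<Rightarrow> real \<Rightarrow> real) \<Rightarrow> bool" where
  "class_KL \<beta> \<longleftrightarrow>
     (\<forall>t\<ge>0. class_K (\<lambda>s. \<beta> s t)) \<and>
     (\<forall>s\<ge>0. antimono_on {0..} (\<beta> s) \<and> ((\<beta> s) \<longlongrightarrow> 0) at_top)"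

definition ISS_discrete :: "('a::real_normed_vector \<Rightarrow> 'b::real_normed_vector \<Rightarrow> 'a) \<Rightarrow> 'a set \<Rightarrow> bool" where
  "ISS_discrete G A \<longleftrightarrow>
     (\<exists>\<beta> \<alpha>. class_KL \<beta> \<and> class_Kinf \<alpha> \<and>
       (\<forall>e x. bounded (range e) \<longrightarrow> (\<forall>j. x (Suc j) = G (x j) (e j)) \<longrightarrow>
          (\<forall>j. infdist (x j) A \<le> \<beta> (infdist (x 0) A) (real j) + \<alpha> (SUP k. norm (e k)))))"

definition assumption_A ::
  "(real^'n \<Rightarrow> real) \<Rightarrow> (real^'n \<Rightarrow> real^'n) \<Rightarrow> real \<Rightarrow> real^'n \<Rightarrow> bool" where
  "assumption_A phi grad L ustar \<longleftrightarrow>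
     (\<forall>u. GDERIV phi u :> grad u) \<and> continuous_on UNIV grad \<and> L > 0 \<and>
     (\<forall>u. grad u = 0 \<longleftrightarrow> u = ustar) \<and>
     (\<exists>\<mu>1 \<mu>2. class_Kinf \<mu>1 \<and> class_Kinf \<mu>2 \<and>
        (\<forall>u. \<mu>1 (norm (u - ustar)) \<le> phi u - phi ustar) \<and>
        (\<forall>u. \<mu>2 (phi u - phi ustar) \<le> norm (grad u))) \<and>
     (\<forall>u v. norm (grad u - grad v) \<le> L * norm (u - v))"

end

theory Submission
  imports Defs
begin


lemma classK_less: "class_K f \<Longrightarrow> 0 \<le> x \<Longrightarrow> x < y \<Longrightarrow> f x < f y"
  unfolding class_K_def by (auto intro: strict_mono_onD)
lemma classK_mono: "class_K f \<Longrightarrow> 0 \<le> x \<Longrightarrow> x \<le> y \<Longrightarrow> f x \<le> f y"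
  using classK_less[of f x y] by (cases "x = y") auto
lemma classK_nonneg: "class_K f \<Longrightarrow> 0 \<le> x \<Longrightarrow> 0 \<le> f x"
  using classK_mono[of f 0 x] unfolding class_K_def by auto
lemma classK_le_iff: "class_K f \<Longrightarrow> 0 \<le> x \<Longrightarrow> 0 \<le> y \<Longrightarrow> f x \<le> f y \<longleftrightarrow> x \<le> y"
  using classK_less[of f y x] classK_mono[of f x y] by (cases "x \<le> y") auto
lemma classK_pos: "class_K f \<Longrightarrow> 0 < x \<Longrightarrow> 0 < f x"
  using classK_less[of f 0 x] unfolding class_K_def by auto

lemma Kinf_comp:
  assumes "class_Kinf f" "class_Kinf g"
  shows "class_Kinf (\<lambda>x. f (g x))"
proof -
  have f: "class_K f" and g: "class_K g" using assms by (auto simp: class_Kinf_def)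
  have sub: "g ` {0..} \<subseteq> {0..}" using classK_nonneg[OF g] by auto
  have "continuous_on {0..} (\<lambda>x. f (g x))"
    using f g sub unfolding class_K_def
    by (intro continuous_on_compose2[of "{0..}" f "{0..}" g]) auto
  moreover have "strict_mono_on {0..} (\<lambda>x. f (g x))"
    by (rule strict_mono_onI) (auto intro!: classK_less[OF f] classK_less[OF g] classK_nonneg[OF g])
  moreover have "f (g 0) = 0" using f g by (simp add: class_K_def)
  moreover have "filterlim (\<lambda>x. f (g x)) at_top at_top"
    using assms unfolding class_Kinf_def by (auto intro: filterlim_compose)
  ultimately show ?thesis by (simp add: class_Kinf_def class_K_def)
qed

lemma Kinf_add:
  assumes "class_Kinf f" "class_Kinf g"
  shows "class_Kinf (\<lambda>x. f x + g x)"
proof -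
  have f: "class_K f" and g: "class_K g" using assms by (auto simp: class_Kinf_def)
  have "continuous_on {0..} (\<lambda>x. f x + g x)"
    using f g unfolding class_K_def by (intro continuous_intros) auto
  moreover have "strict_mono_on {0..} (\<lambda>x. f x + g x)"
    by (rule strict_mono_onI) (auto intro!: add_strict_mono classK_less[OF f] classK_less[OF g])
  moreover have "f 0 + g 0 = 0" using f g by (simp add: class_K_def)
  moreover have "filterlim (\<lambda>x. f x + g x) at_top at_top"
    using assms unfolding class_Kinf_def by (auto intro: filterlim_at_top_add_at_top)
  ultimately show ?thesis by (simp add: class_Kinf_def class_K_def)
qed

lemma Kinf_scale:
  assumes "class_Kinf f" "c > 0"
  shows "class_Kinf (\<lambda>x. c * f x)"
proof -
  have f: "class_K f" using assms by (auto simp: class_Kinf_def)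
  have "continuous_on {0..} (\<lambda>x. c * f x)"
    using f unfolding class_K_def by (intro continuous_intros) auto
  moreover have "strict_mono_on {0..} (\<lambda>x. c * f x)"
    by (rule strict_mono_onI) (auto intro!: classK_less[OF f] simp: assms)
  moreover have "c * f 0 = 0" using f by (simp add: class_K_def)
  moreover have "filterlim (\<lambda>x. c * f x) at_top at_top"
    using assms unfolding class_Kinf_def
    by (auto intro!: filterlim_tendsto_pos_mult_at_top[OF tendsto_const])
  ultimately show ?thesis by (simp add: class_Kinf_def class_K_def)
qed

lemma Kinf_sq: "class_Kinf (\<lambda>x::real. x^2)"
proof -
  have "continuous_on {0..} (\<lambda>x::real. x^2)" by (intro continuous_intros)
  moreover have "strict_mono_on {0..} (\<lambda>x::real. x^2)"
    by (rule strict_mono_onI) (auto intro!: power_strict_mono)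
  moreover have "filterlim (\<lambda>x::real. x^2) at_top at_top"
    by (intro filterlim_pow_at_top filterlim_ident) auto
  ultimately show ?thesis by (simp add: class_Kinf_def class_K_def)
qed

lemma Kinf_id: "class_Kinf (\<lambda>x::real. x)"
  by (simp add: class_Kinf_def class_K_def filterlim_ident strict_mono_onI)

lemma Kinf_inverse:
  assumes "class_Kinf \<mu>"
  shows "\<exists>\<nu>. class_Kinf \<nu> \<and> (\<forall>x\<ge>0. \<nu> (\<mu> x) = x) \<and> (\<forall>y\<ge>0. \<mu> (\<nu> y) = y \<and> \<nu> y \<ge> 0)"
proof -
  have K: "class_K \<mu>" and lim: "filterlim \<mu> at_top at_top" using assms by (auto simp: class_Kinf_def)
  have c: "continuous_on {0..} \<mu>" and z: "\<mu> 0 = 0" using K by (auto simp: class_K_def)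
  define m where "m x = (if x \<le> 0 then x else \<mu> x)" for x
  have msurj: "\<exists>x\<ge>0. \<mu> x = y" if "y \<ge> 0" for y
  proof -
    from lim have "eventually (\<lambda>x. y \<le> \<mu> x) at_top" by (simp add: filterlim_at_top)
    then obtain X where X: "\<And>x. x \<ge> X \<Longrightarrow> y \<le> \<mu> x" by (auto simp: eventually_at_top_linorder)
    have "\<exists>x\<ge>0. x \<le> max X 0 \<and> \<mu> x = y"
      using that X[of "max X 0"] z
      by (intro IVT') (auto intro: continuous_on_subset[OF c])
    then show ?thesis by auto
  qed
  define \<nu> where "\<nu> y = (if y \<le> 0 then y else (SOME x. x \<ge> 0 \<and> \<mu> x = y))" for y
  have nu_mu: "\<nu> (\<mu> x) = x" if "x \<ge> 0" for x
  proof (cases "x = 0")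
    case True then show ?thesis by (simp add: \<nu>_def z)
  next
    case False
    then have pos: "\<mu> x > 0" using classK_pos[OF K] that by auto
    have "\<exists>x'. x' \<ge> 0 \<and> \<mu> x' = \<mu> x" using that by auto
    then have "(SOME x'. x' \<ge> 0 \<and> \<mu> x' = \<mu> x) \<ge> 0 \<and> \<mu> (SOME x'. x' \<ge> 0 \<and> \<mu> x' = \<mu> x) = \<mu> x"
      by (rule someI_ex)
    moreover have "\<And>a. a \<ge> 0 \<Longrightarrow> \<mu> a = \<mu> x \<Longrightarrow> a = x"
      using classK_le_iff[OF K] that by (metis order_antisym order_refl)
    ultimately have "(SOME x'. x' \<ge> 0 \<and> \<mu> x' = \<mu> x) = x" by blast
    then show ?thesis using pos by (simp add: \<nu>_def)
  qed
  have mu_nu: "\<mu> (\<nu> y) = y \<and> \<nu> y \<ge> 0" if "y \<ge> 0" for y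
    using msurj[OF that] nu_mu by auto
  have nu_m: "\<nu> (m x) = x" for x
  proof (cases "x \<le> 0")
    case True then show ?thesis by (simp add: m_def \<nu>_def)
  next
    case False then show ?thesis using nu_mu[of x] by (simp add: m_def)
  qed
  have mc: "continuous_on UNIV m"
    unfolding m_def
    by (rule continuous_on_cases_le) (auto intro: continuous_on_subset[OF c] continuous_intros simp: z)
  have mcont: "isCont m x" for x using mc by (simp add: continuous_on_eq_continuous_at)
  have ncont: "isCont \<nu> y" for y
  proof -
    have "y = m (\<nu> y)"
      using mu_nu[of y] by (cases "y \<le> 0") (auto simp: m_def \<nu>_def z)
    moreover have "isCont \<nu> (m (\<nu> y))"
      by (rule isCont_inverse_function2[of "\<nu> y - 1" _ "\<nu> y + 1"]) (auto simp: nu_m mcont)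
    ultimately show ?thesis by simp
  qed
  have "class_K \<nu>"
    unfolding class_K_def
  proof (intro conjI)
    show "continuous_on {0..} \<nu>" using ncont by (simp add: continuous_at_imp_continuous_on)
    show "\<nu> 0 = 0" by (simp add: \<nu>_def)
    show "strict_mono_on {0..} \<nu>"
    proof (rule strict_mono_onI)
      fix r s :: real assume "r \<in> {0..}" "s \<in> {0..}" "r < s"
      then show "\<nu> r < \<nu> s"
        using mu_nu[of r] mu_nu[of s] classK_le_iff[OF K, of "\<nu> s" "\<nu> r"] by auto
    qed
  qed
  moreover have "filterlim \<nu> at_top at_top"
    unfolding filterlim_at_top
  proof
    fix Z :: real
    have "eventually (\<lambda>y. \<mu> (max Z 0) \<le> y) at_top" by (rule eventually_ge_at_top)
    then show "eventually (\<lambda>y. Z \<le> \<nu> y) at_top"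
    proof (rule eventually_mono)
      fix y assume a: "\<mu> (max Z 0) \<le> y"
      have "0 \<le> \<mu> (max Z 0)" by (rule classK_nonneg[OF K]) auto
      then have "max Z 0 \<le> \<nu> y"
        using a mu_nu[of y] classK_le_iff[OF K, of "max Z 0" "\<nu> y"] by auto
      then show "Z \<le> \<nu> y" by simp
    qed
  qed
  ultimately show ?thesis using nu_mu mu_nu by (auto simp: class_Kinf_def)
qed



lemma descent_map:
  assumes K: "class_K \<rho>"
  shows "\<exists>F. continuous_on UNIV F \<and> F 0 = 0 \<and> strict_mono_on {0..} F \<and>
     (\<forall>v\<ge>0. 0 \<le> F v \<and> F v \<le> v \<and> v - \<rho> v / 2 \<le> F v) \<and> (\<forall>v>0. F v < v)"
proof -
  define q where "q w = min (\<rho> w / 2) w" for w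
  have q0: "q w \<ge> 0" if "w \<ge> 0" for w using classK_nonneg[OF K that] that by (simp add: q_def)
  have qmono: "q w \<le> q w'" if "0 \<le> w" "w \<le> w'" for w w'
    using classK_mono[OF K that] that by (auto simp: q_def)
  have qpos: "q w > 0" if "w > 0" for w using classK_pos[OF K that] that by (simp add: q_def)
  define r where "r v = Inf ((\<lambda>w. q w + \<bar>v - w\<bar>) ` {0..})" for v
  have bdd: "bdd_below ((\<lambda>w. q w + \<bar>v - w\<bar>) ` {0..})" for v
    by (rule bdd_belowI[of _ 0]) (auto intro: add_nonneg_nonneg q0)
  have rlow: "r v \<le> q w + \<bar>v - w\<bar>" if "w \<ge> 0" for v w
    unfolding r_def by (rule cInf_lower[OF _ bdd]) (use that in auto)
  have rge: "c \<le> r v" if "\<And>w. w \<ge> 0 \<Longrightarrow> c \<le> q w + \<bar>v - w\<bar>" for c v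
    unfolding r_def by (rule cInf_greatest) (use that in auto)
  have r0: "r v \<ge> 0" for v by (rule rge) (auto intro: add_nonneg_nonneg q0)
  have rq: "r v \<le> q v" if "v \<ge> 0" for v using rlow[OF that, of v] by simp
  have rlip: "r v \<le> r v' + \<bar>v - v'\<bar>" for v v'
  proof -
    have "r v - \<bar>v - v'\<bar> \<le> r v'"
    proof (rule rge)
      fix w :: real assume "w \<ge> 0"
      then have "r v \<le> q w + \<bar>v - w\<bar>" by (rule rlow)
      then show "r v - \<bar>v - v'\<bar> \<le> q w + \<bar>v' - w\<bar>" by linarith
    qed
    then show ?thesis by simp
  qed
  have rpos: "r v > 0" if "v > 0" for v
  proof -
    have "min (q (v/2)) (v/2) \<le> r v"
    proof (rule rge)
      fix w :: real assume w: "w \<ge> 0"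
      show "min (q (v/2)) (v/2) \<le> q w + \<bar>v - w\<bar>"
      proof (cases "w \<ge> v/2")
        case True then have "q (v/2) \<le> q w" using that by (intro qmono) auto
        then show ?thesis by auto
      next
        case False then show ?thesis using q0[OF w] by auto
      qed
    qed
    moreover have "min (q (v/2)) (v/2) > 0" using qpos[of "v/2"] that by auto
    ultimately show ?thesis by linarith
  qed
  define F where "F v = v - r v / 2" for v
  have "continuous_on UNIV F"
  proof -
    have "(3/2)-lipschitz_on UNIV F"
    proof (rule lipschitz_onI)
      fix x y :: real
      show "dist (F x) (F y) \<le> 3/2 * dist x y"
        using rlip[of x y] rlip[of y x] by (auto simp: F_def dist_real_def abs_if split: if_splits)
    qed auto
    then show ?thesis by (rule lipschitz_on_continuous_on)
  qed
  moreover have "F 0 = 0" using rq[of 0] r0[of 0] by (simp add: F_def q_def)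
  moreover have "strict_mono_on {0..} F"
  proof (rule strict_mono_onI)
    fix v v' :: real assume "v < v'"
    then show "F v < F v'" using rlip[of v' v] by (simp add: F_def)
  qed
  moreover have "\<forall>v\<ge>0. 0 \<le> F v \<and> F v \<le> v \<and> v - \<rho> v / 2 \<le> F v"
  proof (intro allI impI conjI)
    fix v :: real assume v: "v \<ge> 0"
    have "r v \<le> q v" by (rule rq[OF v])
    moreover have "q v \<le> v" "q v \<le> \<rho> v / 2" by (auto simp: q_def)
    ultimately show "0 \<le> F v" "v - \<rho> v / 2 \<le> F v" using r0[of v] classK_nonneg[OF K v]
      by (auto simp: F_def)
    show "F v \<le> v" using r0[of v] by (simp add: F_def)
  qed
  moreover have "\<forall>v>0. F v < v" using rpos by (simp add: F_def)
  ultimately show ?thesis by blast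
qed


lemma iter_props:
  fixes F :: "real \<Rightarrow> real"
  assumes c: "continuous_on UNIV F" and F0: "F 0 = 0" and sm: "strict_mono_on {0..} F"
    and b: "\<forall>v\<ge>0. 0 \<le> F v \<and> F v \<le> v" and lt: "\<forall>v>0. F v < v"
  shows "\<And>n s. s \<ge> 0 \<Longrightarrow> (F^^n) s \<ge> 0"
    and "\<And>n. (F^^n) 0 = 0"
    and "\<And>n. strict_mono_on {0..} (F^^n)"
    and "\<And>n. continuous_on UNIV (F^^n)"
    and "\<And>n m s. s \<ge> 0 \<Longrightarrow> n \<le> m \<Longrightarrow> (F^^m) s \<le> (F^^n) s"
    and "\<And>s. s \<ge> 0 \<Longrightarrow> (\<lambda>n. (F^^n) s) \<longlonglongrightarrow> 0"
proof -
  show nn: "(F^^n) s \<ge> 0" if "s \<ge> 0" for n s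
    using that b by (induction n) auto
  show "(F^^n) 0 = 0" for n by (induction n) (auto simp: F0)
  show "strict_mono_on {0..} (F^^n)" for n
  proof (induction n)
    case 0 then show ?case by (simp add: strict_mono_onI)
  next
    case (Suc n)
    show ?case
    proof (rule strict_mono_onI)
      fix x y :: real assume "x \<in> {0..}" "y \<in> {0..}" "x < y"
      then have "(F^^n) x < (F^^n) y" using Suc by (auto intro: strict_mono_onD)
      then show "(F^^Suc n) x < (F^^Suc n) y"
        using nn[of x n] nn[of y n] \<open>x \<in> {0..}\<close> \<open>y \<in> {0..}\<close> sm
        by (auto intro: strict_mono_onD)
    qed
  qed
  show "continuous_on UNIV (F^^n)" for n
  proof (induction n)
    case 0 then show ?case by (simp add: continuous_on_id)
  next
    case (Suc n)
    have "continuous_on UNIV (F \<circ> (F^^n))"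
      by (rule continuous_on_compose[OF Suc]) (rule continuous_on_subset[OF c], auto)
    then show ?case by simp
  qed
  have dec: "(F^^Suc n) s \<le> (F^^n) s" if "s \<ge> 0" for n s
    using b nn[OF that, of n] by auto
  show "(F^^m) s \<le> (F^^n) s" if "s \<ge> 0" "n \<le> m" for n m s
    using that(2)
  proof (induction m)
    case 0 then show ?case by simp
  next
    case (Suc m)
    then show ?case using dec[OF that(1), of m] by (cases "n = Suc m") auto
  qed
  show "(\<lambda>n. (F^^n) s) \<longlonglongrightarrow> 0" if s: "s \<ge> 0" for s
  proof -
    have "decseq (\<lambda>n. (F^^n) s)" using dec[OF s] by (simp add: decseq_SucI)
    then obtain L where L: "(\<lambda>n. (F^^n) s) \<longlonglongrightarrow> L" "\<forall>i. L \<le> (F^^i) s"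
      using decseq_convergent[of "\<lambda>n. (F^^n) s" 0] nn[OF s] by blast
    have "(\<lambda>n. F ((F^^n) s)) \<longlonglongrightarrow> F L"
      using c L(1) by (intro isCont_tendsto_compose[of L F]) (auto simp: continuous_on_eq_continuous_at)
    moreover have "(\<lambda>n. F ((F^^n) s)) \<longlonglongrightarrow> L"
      using LIMSEQ_Suc[OF L(1)] by simp
    ultimately have "F L = L" using LIMSEQ_unique by blast
    moreover have "L \<ge> 0" using L(1) nn[OF s] by (intro LIMSEQ_le_const) auto
    ultimately have "L = 0" using lt by (cases "L > 0") auto
    then show ?thesis using L by simp
  qed
qed


lemma comparison:
  fixes F \<rho> :: "real \<Rightarrow> real" and v :: "nat \<Rightarrow> real"
  assumes K: "class_K \<rho>" and sm: "strict_mono_on {0..} F"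
    and b: "\<forall>v\<ge>0. 0 \<le> F v \<and> F v \<le> v \<and> v - \<rho> v / 2 \<le> F v"
    and T0: "T0 \<ge> 0" "\<rho> T0 = 2 * d" and d: "d \<ge> 0"
    and vn: "\<And>j. 0 \<le> v j" and step: "\<And>j. v (Suc j) \<le> v j - \<rho> (v j) + d"
  shows "v j \<le> max ((F^^j) (v 0)) (T0 + d)"
proof (induction j)
  case 0 then show ?case by simp
next
  case (Suc j)
  have Fmono: "F x \<le> F y" if "0 \<le> x" "x \<le> y" for x y
    using strict_mono_onD[OF sm, of x y] that by (cases "x = y") auto
  have nnF: "(F^^n) s \<ge> 0" if "s \<ge> 0" for n s
    using that b by (induction n) auto
  show ?case
  proof (cases "\<rho> (v j) \<ge> 2 * d")
    case True
    then have "v (Suc j) \<le> v j - \<rho> (v j) / 2" using step[of j] by linarith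
    also have "\<dots> \<le> F (v j)" using b vn[of j] by auto
    also have "\<dots> \<le> F (max ((F^^j) (v 0)) (T0 + d))"
      using Suc vn[of j] by (intro Fmono) auto
    also have "\<dots> \<le> max ((F^^Suc j) (v 0)) (T0 + d)"
    proof (cases "(F^^j) (v 0) \<le> T0 + d")
      case True
      then have "max ((F^^j) (v 0)) (T0 + d) = T0 + d" by simp
      moreover have "F (T0 + d) \<le> T0 + d" using b T0 d by simp
      ultimately show ?thesis by simp
    next
      case False
      then show ?thesis by simp
    qed
    finally show ?thesis .
  next
    case False
    then have "v j < T0"
      using classK_mono[OF K, of T0 "v j"] T0 by force
    then show ?thesis using step[of j] classK_nonneg[OF K vn[of j]] by auto
  qed
qed



lemma descent_lemma:
  fixes phi :: "'a::real_inner \<Rightarrow> real"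
  assumes gd: "\<And>u. GDERIV phi u :> grad u"
    and lip: "\<And>u v. norm (grad u - grad v) \<le> L * norm (u - v)"
  shows "phi v \<le> phi u + inner (grad u) (v - u) + L / 2 * (norm (v - u))^2"
proof -
  define d where "d = v - u"
  define k where "k t = phi (u + t *\<^sub>R d) - t * inner (grad u) d - L / 2 * t^2 * (norm d)^2" for t
  have dphi: "((\<lambda>t. phi (u + t *\<^sub>R d)) has_real_derivative inner d (grad (u + t *\<^sub>R d))) (at t)" for t
  proof -
    have h1: "((\<lambda>t. u + t *\<^sub>R d) has_derivative (\<lambda>h. h *\<^sub>R d)) (at t)"
      by (auto intro!: derivative_eq_intros)
    have h2: "(phi has_derivative (\<lambda>h. inner h (grad (u + t *\<^sub>R d)))) (at (u + t *\<^sub>R d))"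
      using gd[of "u + t *\<^sub>R d"] by (simp add: gderiv_def)
    have "((\<lambda>t. phi (u + t *\<^sub>R d)) has_derivative (\<lambda>h. inner (h *\<^sub>R d) (grad (u + t *\<^sub>R d)))) (at t)"
      using has_derivative_compose[OF h1 h2] by (simp add: o_def)
    moreover have "(\<lambda>h. inner (h *\<^sub>R d) (grad (u + t *\<^sub>R d))) = (*) (inner d (grad (u + t *\<^sub>R d)))"
      by (auto simp: fun_eq_iff)
    ultimately show ?thesis by (simp add: has_field_derivative_def)
  qed
  have dk: "(k has_real_derivative (inner d (grad (u + t *\<^sub>R d)) - inner (grad u) d - L * t * (norm d)^2)) (at t)" for t
    unfolding k_def by (rule derivative_eq_intros dphi refl | simp)+
  have "k 1 \<le> k 0"
  proof (rule DERIV_nonpos_imp_nonincreasing[of 0 1 k])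
    fix t :: real assume t: "0 \<le> t" "t \<le> 1"
    have "inner d (grad (u + t *\<^sub>R d)) - inner (grad u) d = inner (grad (u + t *\<^sub>R d) - grad u) d"
      by (metis inner_commute inner_diff_right)
    also have "\<dots> \<le> norm (grad (u + t *\<^sub>R d) - grad u) * norm d" by (rule norm_cauchy_schwarz)
    also have "\<dots> \<le> (L * norm (t *\<^sub>R d)) * norm d"
      using lip[of "u + t *\<^sub>R d" u] by (intro mult_right_mono) auto
    also have "\<dots> = L * t * (norm d)^2" using t by (simp add: power2_eq_square)
    finally show "\<exists>y. (k has_real_derivative y) (at t) \<and> y \<le> 0"
      using dk[of t] by auto
  qed simp
  then show ?thesis by (simp add: k_def d_def algebra_simps inner_commute)
qed

lemma amgm: "(c::real) > 0 \<Longrightarrow> a * b \<le> c / 2 * a^2 + b^2 / (2 * c)"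
proof -
  assume c: "c > 0"
  have "0 \<le> (c * a - b)^2" by simp
  then have "2 * c * (a * b) \<le> c^2 * a^2 + b^2" by (simp add: power2_eq_square algebra_simps)
  then have "a * b \<le> (c^2 * a^2 + b^2) / (2 * c)" using c by (simp add: field_simps)
  also have "\<dots> = c / 2 * a^2 + b^2 / (2 * c)" using c by (simp add: field_simps power2_eq_square)
  finally show ?thesis .
qed

lemma scalar_step:
  fixes \<gamma> L G E p D :: real
  assumes c: "c = \<gamma> * (1 - L * \<gamma> / 2)" "c > 0"
    and K0: "K0 = (\<gamma> * (1 - L * \<gamma>))^2 / (2 * c) + L * \<gamma>^2 / 2"
    and p: "\<bar>p\<bar> \<le> G * E" and G: "G \<ge> 0" and E: "E \<ge> 0"
    and D: "D \<le> - \<gamma> * (G^2 + p) + L / 2 * \<gamma>^2 * (G^2 + 2 * p + E^2)"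
  shows "D \<le> - c / 2 * G^2 + K0 * E^2"
proof -
  define a where "a = \<gamma> * (1 - L * \<gamma>)"
  have "- (a * p) \<le> \<bar>a\<bar> * \<bar>p\<bar>" by (simp add: abs_mult[symmetric])
  also have "\<dots> \<le> \<bar>a\<bar> * (G * E)" by (intro mult_left_mono p) auto
  also have "\<dots> = G * (\<bar>a\<bar> * E)" by simp
  also have "\<dots> \<le> c / 2 * G^2 + (\<bar>a\<bar> * E)^2 / (2 * c)" by (rule amgm[OF c(2)])
  also have "(\<bar>a\<bar> * E)^2 = a^2 * E^2" by (simp add: power_mult_distrib)
  finally have ap: "- (a * p) \<le> c / 2 * G^2 + a^2 * E^2 / (2 * c)" by simp
  have eq: "- \<gamma> * (G^2 + p) + L / 2 * \<gamma>^2 * (G^2 + 2 * p + E^2) = - c * G^2 - a * p + L * \<gamma>^2 / 2 * E^2"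
    unfolding c(1) a_def by (simp add: field_simps power2_eq_square)
  have "D \<le> - c * G^2 - a * p + L * \<gamma>^2 / 2 * E^2"
    using D eq by linarith
  also have "\<dots> \<le> - c / 2 * G^2 + (a^2 / (2 * c) + L * \<gamma>^2 / 2) * E^2"
    using ap by (simp add: algebra_simps)
  finally show ?thesis unfolding K0 a_def .
qed



lemma K_comp:
  assumes f: "class_K f" and g: "class_K g"
  shows "class_K (\<lambda>x. f (g x))"
proof -
  have sub: "g ` {0..} \<subseteq> {0..}" using classK_nonneg[OF g] by auto
  have "continuous_on {0..} (\<lambda>x. f (g x))"
    using f g sub unfolding class_K_def
    by (intro continuous_on_compose2[of "{0..}" f "{0..}" g]) auto
  moreover have "strict_mono_on {0..} (\<lambda>x. f (g x))"
    by (rule strict_mono_onI) (auto intro!: classK_less[OF f] classK_less[OF g] classK_nonneg[OF g])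
  moreover have "f (g 0) = 0" using f g by (simp add: class_K_def)
  ultimately show ?thesis by (simp add: class_K_def)
qed

theorem proposition2:
  fixes phi :: "real^'n \<Rightarrow> real" and grad :: "real^'n \<Rightarrow> real^'n"
    and L \<gamma> :: real and ustar :: "real^'n"
  assumes "assumption_A phi grad L ustar"
    and "0 < \<gamma> * L" and "\<gamma> * L < 2"
  shows "ISS_discrete (\<lambda>u e. u - \<gamma> *\<^sub>R (grad u + e)) {ustar}"
proof -
  from assms(1) obtain \<mu>1 \<mu>2 where
    gd: "\<And>u. GDERIV phi u :> grad u" and Lpos: "L > 0" and gz: "grad ustar = 0"
    and m1: "class_Kinf \<mu>1" and m2: "class_Kinf \<mu>2"
    and lb: "\<And>u. \<mu>1 (norm (u - ustar)) \<le> phi u - phi ustar"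
    and gb: "\<And>u. \<mu>2 (phi u - phi ustar) \<le> norm (grad u)"
    and lip: "\<And>u v. norm (grad u - grad v) \<le> L * norm (u - v)"
    unfolding assumption_A_def by blast
  have gpos: "\<gamma> > 0" using assms(2) Lpos by (simp add: zero_less_mult_iff)
  have K1: "class_K \<mu>1" and K2: "class_K \<mu>2" using m1 m2 by (auto simp: class_Kinf_def)
  define V where "V u = phi u - phi ustar" for u
  have Vnn: "V u \<ge> 0" for u
    using lb[of u] classK_nonneg[OF K1, of "norm (u - ustar)"] by (simp add: V_def)
  have Vup: "V u \<le> L / 2 * (norm (u - ustar))^2" for u
    using descent_lemma[OF gd lip, of u ustar] gz by (simp add: V_def)
  define c where "c = \<gamma> * (1 - L * \<gamma> / 2)"
  have cpos: "c > 0" using gpos assms(3) by (simp add: c_def mult.commute)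
  define K0 where "K0 = (\<gamma> * (1 - L * \<gamma>))^2 / (2 * c) + L * \<gamma>^2 / 2"
  have K0pos: "K0 > 0" using cpos Lpos gpos
    by (simp add: K0_def add_nonneg_pos)
  define \<rho> where "\<rho> v = c / 2 * (\<mu>2 v)^2" for v
  have rhoK: "class_Kinf \<rho>"
    unfolding \<rho>_def using cpos by (intro Kinf_scale Kinf_comp[OF Kinf_sq m2]) auto
  then have rK: "class_K \<rho>" by (simp add: class_Kinf_def)
  have step: "V (x - \<gamma> *\<^sub>R (grad x + e)) \<le> V x - \<rho> (V x) + K0 * (norm e)^2" for x e
  proof -
    define g where "g = grad x"
    have D: "V (x - \<gamma> *\<^sub>R (grad x + e)) - V x \<le> - \<gamma> * ((norm g)^2 + inner g e) + L / 2 * \<gamma>^2 * ((norm g)^2 + 2 * inner g e + (norm e)^2)"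
    proof -
      have "phi (x - \<gamma> *\<^sub>R (g + e)) \<le> phi x + inner g (- (\<gamma> *\<^sub>R (g + e))) + L / 2 * (norm (- (\<gamma> *\<^sub>R (g + e))))^2"
        using descent_lemma[OF gd lip, of "x - \<gamma> *\<^sub>R (g + e)" x] by (simp add: g_def)
      also have "inner g (- (\<gamma> *\<^sub>R (g + e))) = - \<gamma> * ((norm g)^2 + inner g e)"
        by (simp add: inner_add_right power2_norm_eq_inner algebra_simps)
      also have "(norm (- (\<gamma> *\<^sub>R (g + e))))^2 = \<gamma>^2 * ((norm g)^2 + 2 * inner g e + (norm e)^2)"
      proof -
        have "(norm (- (\<gamma> *\<^sub>R (g + e))))^2 = \<gamma>^2 * (norm (g + e))^2"
          by (simp add: power_mult_distrib)
        moreover have "(norm (g + e))^2 = (norm g)^2 + 2 * inner g e + (norm e)^2"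
          unfolding power2_norm_eq_inner by (simp add: inner_add_left inner_add_right inner_commute)
        ultimately show ?thesis by simp
      qed
      finally show ?thesis by (simp add: V_def g_def algebra_simps)
    qed
    have "V (x - \<gamma> *\<^sub>R (grad x + e)) - V x \<le> - c / 2 * (norm g)^2 + K0 * (norm e)^2"
      by (rule scalar_step[OF c_def cpos K0_def _ _ _ D])
         (simp_all add: Cauchy_Schwarz_ineq2)
    moreover have "(\<mu>2 (V x))^2 \<le> (norm g)^2"
      using gb[of x] classK_nonneg[OF K2 Vnn[of x]] by (intro power_mono) (auto simp: V_def g_def)
    moreover have "c * (\<mu>2 (V x))^2 \<le> c * (norm g)^2" using calculation(2) cpos by simp
    ultimately show ?thesis by (simp add: \<rho>_def)
  qed
  obtain \<iota> where iK: "class_Kinf \<iota>" and iinv: "\<And>x. x \<ge> 0 \<Longrightarrow> \<iota> (\<mu>1 x) = x"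
    and iinv2: "\<And>y. y \<ge> 0 \<Longrightarrow> \<mu>1 (\<iota> y) = y \<and> \<iota> y \<ge> 0"
    using Kinf_inverse[OF m1] by blast
  obtain \<nu> where nK: "class_Kinf \<nu>"
    and ninv2: "\<And>y. y \<ge> 0 \<Longrightarrow> \<rho> (\<nu> y) = y \<and> \<nu> y \<ge> 0"
    using Kinf_inverse[OF rhoK] by blast
  have iKK: "class_K \<iota>" using iK by (simp add: class_Kinf_def)
  obtain F where Fc: "continuous_on UNIV F" and F0: "F 0 = 0" and Fsm: "strict_mono_on {0..} F"
    and Fb: "\<forall>v\<ge>0. 0 \<le> F v \<and> F v \<le> v \<and> v - \<rho> v / 2 \<le> F v" and Flt: "\<forall>v>0. F v < v"
    using descent_map[OF rK] by blast
  have Fb': "\<forall>v\<ge>0. 0 \<le> F v \<and> F v \<le> v" using Fb by blast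
  note it = iter_props[OF Fc F0 Fsm Fb' Flt]
  have FnK: "class_K (F^^n)" for n
    using it(2,3,4)[of n] by (auto simp: class_K_def intro: continuous_on_subset)
  have hK: "class_Kinf (\<lambda>s. L / 2 * s^2)" using Lpos by (intro Kinf_scale Kinf_sq) auto
  define \<beta> where "\<beta> s t = \<iota> ((F^^(nat \<lfloor>t\<rfloor>)) (L / 2 * s^2))" for s t :: real
  define \<alpha> where "\<alpha> w = \<iota> (\<nu> ((2 * K0) * w^2) + K0 * w^2)" for w :: real
  have "class_KL \<beta>"
    unfolding class_KL_def
  proof (intro conjI allI impI)
    fix t :: real
    show "class_K (\<lambda>s. \<beta> s t)"
      unfolding \<beta>_def
      using hK by (intro K_comp[OF iKK] K_comp[OF FnK]) (auto simp: class_Kinf_def)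
  next
    fix s :: real assume s: "s \<ge> 0"
    have y: "L / 2 * s^2 \<ge> 0" using Lpos by simp
    show "antimono_on {0..} (\<beta> s)"
    proof (rule monotone_onI)
      fix t t' :: real assume "t \<in> {0..}" "t' \<in> {0..}" "t \<le> t'"
      then have "nat \<lfloor>t\<rfloor> \<le> nat \<lfloor>t'\<rfloor>" by (intro nat_mono floor_mono)
      then have "(F^^(nat \<lfloor>t'\<rfloor>)) (L / 2 * s^2) \<le> (F^^(nat \<lfloor>t\<rfloor>)) (L / 2 * s^2)"
        using it(5) y by blast
      then show "\<beta> s t' \<le> \<beta> s t"
        unfolding \<beta>_def using it(1)[OF y] by (intro classK_mono[OF iKK]) auto
    qed
    have lim: "((\<lambda>t. (F^^(nat \<lfloor>t\<rfloor>)) (L / 2 * s^2)) \<longlongrightarrow> 0) at_top"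
      using filterlim_compose[OF it(6)[OF y] filterlim_compose[OF filterlim_nat_sequentially filterlim_floor_sequentially]]
      by simp
    have "((\<lambda>t. \<iota> ((F^^(nat \<lfloor>t\<rfloor>)) (L / 2 * s^2))) \<longlongrightarrow> \<iota> 0) at_top"
      by (rule continuous_on_tendsto_compose[OF _ lim])
         (use iKK it(1)[OF y] in \<open>auto simp: class_K_def\<close>)
    moreover have "\<beta> s = (\<lambda>t. \<iota> ((F^^(nat \<lfloor>t\<rfloor>)) (L / 2 * s^2)))"
      by (rule ext) (simp add: \<beta>_def)
    ultimately show "(\<beta> s \<longlongrightarrow> 0) at_top"
      using iKK by (simp add: class_K_def)
  qed
  moreover have "class_Kinf \<alpha>"
    unfolding \<alpha>_def using K0pos
    by (intro Kinf_comp[OF iK] Kinf_add Kinf_comp[OF nK] Kinf_scale Kinf_sq) auto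
  moreover have "infdist (x j) {ustar} \<le> \<beta> (infdist (x 0) {ustar}) (real j) + \<alpha> (SUP k. norm (e k))"
    if be: "bounded (range e)" and rec: "\<forall>j. x (Suc j) = x j - \<gamma> *\<^sub>R (grad (x j) + e j)" for e x j
  proof -
    define w where "w = (SUP k. norm (e k))"
    have bdd: "bdd_above (range (\<lambda>k. norm (e k)))"
      using be unfolding bounded_iff bdd_above_def by (auto intro!: exI)
    have ew: "norm (e k) \<le> w" for k unfolding w_def by (rule cSUP_upper[OF _ bdd]) auto
    have w0: "w \<ge> 0" using ew[of 0] norm_ge_zero order_trans by blast
    define v where "v j = V (x j)" for j
    define d where "d = K0 * w^2"
    define T0 where "T0 = \<nu> (2 * d)"
    have d0: "d \<ge> 0" using K0pos by (simp add: d_def)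
    have T0: "T0 \<ge> 0" "\<rho> T0 = 2 * d" using ninv2[of "2 * d"] d0 by (auto simp: T0_def)
    have vstep: "v (Suc j) \<le> v j - \<rho> (v j) + d" for j
    proof -
      have "v (Suc j) \<le> v j - \<rho> (v j) + K0 * (norm (e j))^2"
        using step[of "x j" "e j"] rec by (simp add: v_def)
      also have "K0 * (norm (e j))^2 \<le> d"
        unfolding d_def using K0pos ew[of j] by (intro mult_left_mono power_mono) auto
      finally show ?thesis by simp
    qed
    have vb: "v j \<le> max ((F^^j) (v 0)) (T0 + d)"
      by (rule comparison[where v=v, OF rK Fsm Fb T0 d0 _ vstep]) (simp add: v_def Vnn)
    define s where "s = norm (x 0 - ustar)"
    have y: "L / 2 * s^2 \<ge> 0" using Lpos by simp
    have "(F^^j) (v 0) \<le> (F^^j) (L / 2 * s^2)"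
      using Vup[of "x 0"] Vnn[of "x 0"] by (intro classK_mono[OF FnK]) (auto simp: v_def s_def)
    with vb have vb2: "\<mu>1 (norm (x j - ustar)) \<le> max ((F^^j) (L / 2 * s^2)) (T0 + d)"
      using lb[of "x j"] by (auto simp: v_def V_def)
    have A0: "(F^^j) (L / 2 * s^2) \<ge> 0" by (rule it(1)[OF y])
    have B0: "T0 + d \<ge> 0" using T0 d0 by simp
    have "norm (x j - ustar) = \<iota> (\<mu>1 (norm (x j - ustar)))" by (simp add: iinv)
    also have "\<dots> \<le> \<iota> (max ((F^^j) (L / 2 * s^2)) (T0 + d))"
      by (rule classK_mono[OF iKK _ vb2]) (simp add: classK_nonneg[OF K1])
    also have "\<dots> \<le> \<iota> ((F^^j) (L / 2 * s^2)) + \<iota> (T0 + d)"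
      using classK_nonneg[OF iKK A0] classK_nonneg[OF iKK B0] by (simp add: max_def)
    also have "\<iota> ((F^^j) (L / 2 * s^2)) = \<beta> s (real j)" by (simp add: \<beta>_def)
    also have "\<iota> (T0 + d) = \<alpha> w" by (simp add: \<alpha>_def T0_def d_def mult.assoc)
    finally show ?thesis by (simp add: s_def w_def dist_norm)
  qed
  ultimately show ?thesis unfolding ISS_discrete_def by blast
qed


end
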